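(* Let $T\ge 1$, $\ell\ge 0$ and $N\ge 1$ be integers. There exists a $(T,N,1)$-tropical code within maximum delay $\ell$ if and only if $N\le(\ell+2)^T-(\ell+1)^T$.
   Context: Tropical arithmetic on $\mathbb{R}\cup\{\infty\}$: $x\oplus y=\min(x,y)$, $x\odot y=x+y$, with $x\oplus\infty=x$ and $x\odot\infty=\infty$. For a matrix $S$ with $T$ rows and $N$ columns and a column vector $\mathbf{x}$ of length $N$, $S\odot\mathbf{x}$ is the vector whose $t$-th entry is $\min_{j}(S_{tj}+x_j)$. A $(T,N,D)$-tropical code is a matrix $S\in(\{0\}\cup\mathbb{N}\cup\{\infty\})^{T\times N}$ such that for any two distinct vectors $\mathbf{x},\mathbf{y}\in(\{0\}\cup\mathbb{N}\cup\{\infty\})^{N}$, each having at most $D$ finite entries, $S\odot\mathbf{x}\ne S\odot\mathbf{y}$. It is within maximum delay $\ell$ if $S\in\{0,1,\dots,\ell,\infty\}^{T\times N}$. *)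

theory Defs
  imports Main "HOL-Library.Extended_Nat"
begin

text \<open>Tropical values: {0} \<union> \<nat> \<union> {\<infinity>} is modelled by enat.
  Tropical addition is min, tropical multiplication is +, which on enat
  satisfies x + \<infinity> = \<infinity>.  A T\<times>N matrix is a function nat \<Rightarrow> nat \<Rightarrow> enat
  whose relevant entries are those with t < T, j < N; a vector of length N
  is a function nat \<Rightarrow> enat whose relevant entries are those with j < N.\<close>

definition trop_mult_vec :: "nat \<Rightarrow> (nat \<Rightarrow> nat \<Rightarrow> enat) \<Rightarrow> (nat \<Rightarrow> enat) \<Rightarrow> nat \<Rightarrow> enat" where
  "trop_mult_vec N S x t = Min ((\<lambda>j. S t j + x j) ` {..<N})"

definition sparse_vecs :: "nat \<Rightarrow> nat \<Rightarrow> (nat \<Rightarrow> enat) set" where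
  "sparse_vecs N D = {x. (\<forall>j\<ge>N. x j = \<infinity>) \<and> card {j. j < N \<and> x j \<noteq> \<infinity>} \<le> D}"

definition tropical_code :: "nat \<Rightarrow> nat \<Rightarrow> nat \<Rightarrow> (nat \<Rightarrow> nat \<Rightarrow> enat) \<Rightarrow> bool" where
  "tropical_code T N D S \<longleftrightarrow>
     (\<forall>x\<in>sparse_vecs N D. \<forall>y\<in>sparse_vecs N D. x \<noteq> y \<longrightarrow>
        (\<exists>t<T. trop_mult_vec N S x t \<noteq> trop_mult_vec N S y t))"

definition within_delay :: "nat \<Rightarrow> nat \<Rightarrow> nat \<Rightarrow> (nat \<Rightarrow> nat \<Rightarrow> enat) \<Rightarrow> bool" where
  "within_delay T N l S \<longleftrightarrow>
     (\<forall>t<T. \<forall>j<N. S t j = \<infinity> \<or> S t j \<le> enat l)"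

end

theory Submission
  imports Defs "HOL-Library.FuncSet"
begin

definition ev :: "nat \<Rightarrow> nat \<Rightarrow> nat \<Rightarrow> enat" where
  "ev k a = (\<lambda>_. \<infinity>)(k := enat a)"

lemma ev_sparse: "k < N \<Longrightarrow> ev k a \<in> sparse_vecs N 1"
proof -
  assume k: "k < N"
  have "{j. j < N \<and> ev k a j \<noteq> \<infinity>} = {k}" using k by (auto simp: ev_def)
  thus ?thesis using k by (auto simp: sparse_vecs_def ev_def)
qed

lemma inf_sparse: "(\<lambda>_. \<infinity>) \<in> sparse_vecs N 1"
  by (simp add: sparse_vecs_def)

lemma tm_ev: "k < N \<Longrightarrow> trop_mult_vec N S (ev k a) t = S t k + enat a"
  unfolding trop_mult_vec_def
  by (rule Min_eqI) (auto simp: ev_def)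

lemma tm_inf: "N \<ge> 1 \<Longrightarrow> trop_mult_vec N S (\<lambda>_. \<infinity>) t = \<infinity>"
  unfolding trop_mult_vec_def
  by (rule Min_eqI) (auto simp: image_iff intro!: exI[of _ 0])

lemma sparse_cases:
  assumes "x \<in> sparse_vecs N 1"
  shows "x = (\<lambda>_. \<infinity>) \<or> (\<exists>k<N. \<exists>a. x = ev k a)"
proof -
  let ?F = "{j. j < N \<and> x j \<noteq> \<infinity>}"
  have fin: "finite ?F" by auto
  have c: "card ?F \<le> 1" and out: "\<forall>j\<ge>N. x j = \<infinity>" using assms by (auto simp: sparse_vecs_def)
  show ?thesis
  proof (cases "card ?F = 0")
    case True
    then have "?F = {}" using fin by simp
    then have "x = (\<lambda>_. \<infinity>)" using out by (metis (mono_tags, lifting) empty_Collect_eq linorder_not_le)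
    thus ?thesis by simp
  next
    case False
    then have "card ?F = 1" using c by linarith
    then obtain k where k: "?F = {k}" by (auto simp: card_Suc_eq)
    then have kN: "k < N" and xk: "x k \<noteq> \<infinity>" by auto
    then obtain a where a: "x k = enat a" by auto
    have "x = ev k a"
    proof
      fix j show "x j = ev k a j"
      proof (cases "j = k")
        case True thus ?thesis using a by (simp add: ev_def)
      next
        case False
        then have "j \<notin> ?F" using k by auto
        thus ?thesis using False out by (cases "j < N") (auto simp: ev_def)
      qed
    qed
    thus ?thesis using kN by blast
  qed
qed

lemma enat_add_cancel: "(x::enat) + enat a = y + enat a \<Longrightarrow> x = y"
  by (cases x; cases y) auto

lemma card_V:
  fixes T l :: nat
  defines "A \<equiv> insert \<infinity> (enat ` {..l})"
  shows "card (Pi\<^sub>E {..<T} (\<lambda>_. A) - Pi\<^sub>E {..<T} (\<lambda>_. A - {0})) = (l+2)^T - (l+1)^T"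
proof -
  have fA: "finite A" unfolding A_def by auto
  have "\<infinity> \<notin> enat ` {..l}" by auto
  then have cA: "card A = l + 2" unfolding A_def
    by (auto simp: card_image inj_on_def)
  have "A - {0} = insert \<infinity> (enat ` {1..l})" unfolding A_def
    by (auto simp: zero_enat_def image_iff)
  moreover have "\<infinity> \<notin> enat ` {1..l}" by auto
  ultimately have cA0: "card (A - {0}) = l + 1"
    by (simp add: card_image inj_on_def)
  have sub: "Pi\<^sub>E {..<T} (\<lambda>_. A - {0}) \<subseteq> Pi\<^sub>E {..<T} (\<lambda>_. A)" by (auto simp: PiE_def Pi_def)
  have "card (Pi\<^sub>E {..<T} (\<lambda>_. A) - Pi\<^sub>E {..<T} (\<lambda>_. A - {0}))
      = card (Pi\<^sub>E {..<T} (\<lambda>_. A)) - card (Pi\<^sub>E {..<T} (\<lambda>_. A - {0}))"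
    by (rule card_Diff_subset) (use sub fA in \<open>auto intro: finite_PiE finite_subset\<close>)
  also have "\<dots> = (l+2)^T - (l+1)^T"
    using cA cA0 by (simp add: card_PiE)
  finally show ?thesis .
qed

theorem mainTheorem3:
  fixes T l N :: nat
  assumes "T \<ge> 1" and "N \<ge> 1"
  shows "(\<exists>S. tropical_code T N 1 S \<and> within_delay T N l S)
           \<longleftrightarrow> N \<le> (l + 2) ^ T - (l + 1) ^ T"
proof -
  define A where "A = insert \<infinity> (enat ` {..l})"
  define V where "V = Pi\<^sub>E {..<T} (\<lambda>_. A) - Pi\<^sub>E {..<T} (\<lambda>_. A - {0})"
  have cV: "card V = (l+2)^T - (l+1)^T" unfolding V_def A_def by (rule card_V)
  have fV: "finite V" unfolding V_def A_def by (auto intro!: finite_PiE)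
  have memV: "c \<in> V \<longleftrightarrow> c \<in> extensional {..<T} \<and> (\<forall>t<T. c t \<in> A) \<and> (\<exists>t<T. c t = 0)" for c
    unfolding V_def by (auto simp: PiE_def Pi_def)
  show ?thesis
  proof
    assume "\<exists>S. tropical_code T N 1 S \<and> within_delay T N l S"
    then obtain S where code: "tropical_code T N 1 S" and wd: "within_delay T N l S" by blast
    have outs: "x = y" if "x \<in> sparse_vecs N 1" "y \<in> sparse_vecs N 1"
      "\<forall>t<T. trop_mult_vec N S x t = trop_mult_vec N S y t" for x y
      using code that unfolding tropical_code_def by blast
    have fincol: "\<exists>t<T. S t j \<noteq> \<infinity>" if j: "j < N" for j
    proof (rule ccontr)
      assume "\<not> ?thesis"
      then have "\<forall>t<T. trop_mult_vec N S (ev j 0) t = trop_mult_vec N S (\<lambda>_. \<infinity>) t"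
        using j assms by (simp add: tm_ev tm_inf)
      then have "ev j 0 = (\<lambda>_. \<infinity>)" using outs ev_sparse[OF j] inf_sparse by blast
      then show False by (metis ev_def fun_upd_same enat.distinct(1))
    qed
    define m where "m j = the_enat (Min ((\<lambda>t. S t j) ` {..<T}))" for j
    have mprop: "enat (m j) \<le> S t j \<and> (\<exists>t0<T. S t0 j = enat (m j))" if "j < N" "t < T" for j t
    proof -
      have ne: "(\<lambda>t. S t j) ` {..<T} \<noteq> {}" using that by auto
      have fin: "finite ((\<lambda>t. S t j) ` {..<T})" by auto
      obtain t1 where t1: "t1 < T" "S t1 j \<noteq> \<infinity>" using fincol[OF \<open>j < N\<close>] by blast
      have "Min ((\<lambda>t. S t j) ` {..<T}) \<le> S t1 j" using t1 fin by auto
      then have mf: "Min ((\<lambda>t. S t j) ` {..<T}) \<noteq> \<infinity>" using t1(2)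
        by (metis enat_ord_simps(5) top_enat_def top.extremum_unique)
      then have eq: "Min ((\<lambda>t. S t j) ` {..<T}) = enat (m j)" unfolding m_def by auto
      have "Min ((\<lambda>t. S t j) ` {..<T}) \<in> (\<lambda>t. S t j) ` {..<T}" using Min_in[OF fin ne] .
      then obtain t0 where "t0 < T" "S t0 j = enat (m j)" using eq by auto
      moreover have "Min ((\<lambda>t. S t j) ` {..<T}) \<le> S t j" using that fin by auto
      ultimately show ?thesis using eq by auto
    qed
    define f where "f j = restrict (\<lambda>t. S t j - enat (m j)) {..<T}" for j
    have decomp: "S t j = f j t + enat (m j)" if "j < N" "t < T" for j t
    proof -
      have "enat (m j) \<le> S t j" using mprop that by blast
      thus ?thesis using that unfolding f_def by (cases "S t j") auto
    qed
    have fV': "f j \<in> V" if j: "j < N" for j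
    proof -
      have "f j t \<in> A" if t: "t < T" for t
      proof -
        have "S t j = \<infinity> \<or> S t j \<le> enat l" using wd j t unfolding within_delay_def by blast
        thus ?thesis using t unfolding f_def A_def by (cases "S t j") auto
      qed
      moreover obtain t0 where "t0 < T" "S t0 j = enat (m j)" using mprop[OF j] assms by fastforce
      then have "\<exists>t<T. f j t = 0" unfolding f_def by (intro exI[of _ t0]) (auto simp: zero_enat_def)
      ultimately show ?thesis unfolding memV f_def by auto
    qed
    have inj: "inj_on f {..<N}"
    proof
      fix j j' assume j: "j \<in> {..<N}" and j': "j' \<in> {..<N}" and e: "f j = f j'"
      have "\<forall>t<T. trop_mult_vec N S (ev j (m j')) t = trop_mult_vec N S (ev j' (m j)) t"
      proof (intro allI impI)
        fix t assume t: "t < T"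
        have "trop_mult_vec N S (ev j (m j')) t = f j t + enat (m j) + enat (m j')"
          using j t by (simp add: tm_ev decomp)
        also have "\<dots> = f j' t + enat (m j') + enat (m j)" using e by (simp add: ac_simps)
        also have "\<dots> = trop_mult_vec N S (ev j' (m j)) t"
          using j' t by (simp add: tm_ev decomp)
        finally show "trop_mult_vec N S (ev j (m j')) t = trop_mult_vec N S (ev j' (m j)) t" .
      qed
      then have "ev j (m j') = ev j' (m j)" using outs ev_sparse j j' by auto
      then have "ev j (m j') j = ev j' (m j) j" by simp
      then show "j = j'" by (cases "j = j'") (auto simp: ev_def)
    qed
    have "card {..<N} \<le> card V"
      by (rule card_inj_on_le[OF inj]) (use fV' fV in auto)
    thus "N \<le> (l + 2) ^ T - (l + 1) ^ T" using cV by simp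
  next
    assume "N \<le> (l + 2) ^ T - (l + 1) ^ T"
    then have "card {..<N} \<le> card V" using cV by simp
    then obtain g where gV: "g ` {..<N} \<subseteq> V" and ginj: "inj_on g {..<N}"
      using card_le_inj[of "{..<N}" V] fV by auto
    define S where "S t j = g j t" for t j
    have wd: "within_delay T N l S"
      unfolding within_delay_def S_def
    proof (intro allI impI)
      fix t j assume t: "t < T" and j: "j < N"
      then have "g j t \<in> A" using gV memV by auto
      thus "g j t = \<infinity> \<or> g j t \<le> enat l" unfolding A_def by auto
    qed
    have code: "tropical_code T N 1 S"
      unfolding tropical_code_def
    proof (intro ballI impI)
      fix x y assume x: "x \<in> sparse_vecs N 1" and y: "y \<in> sparse_vecs N 1" and xy: "x \<noteq> y"
      show "\<exists>t<T. trop_mult_vec N S x t \<noteq> trop_mult_vec N S y t"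
      proof (rule ccontr)
        assume "\<not> ?thesis"
        then have same: "\<forall>t<T. trop_mult_vec N S x t = trop_mult_vec N S y t" by blast
        have zero: "\<exists>t0<T. S t0 k = 0" if "k < N" for k
          using that gV memV unfolding S_def by auto
        have evnot: "False" if k: "k < N" and "\<forall>t<T. trop_mult_vec N S (ev k a) t = \<infinity>" for k a
        proof -
          obtain t0 where "t0 < T" "S t0 k = 0" using zero k by blast
          thus False using that(2) by (metis plus_enat_simps(1) zero_enat_def enat.distinct(1) tm_ev[OF k])
        qed
        have eveq: "k = k' \<and> a = a'" if k: "k < N" and k': "k' < N"
          and h: "\<forall>t<T. S t k + enat a = S t k' + enat a'" for k k' a a'
        proof -
          obtain t0 where t0: "t0 < T" "S t0 k = 0" using zero k by blast
          obtain t1 where t1: "t1 < T" "S t1 k' = 0" using zero k' by blast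
          have "enat a = S t0 k' + enat a'" using h t0 by auto
          then have "a' \<le> a" by (cases "S t0 k'") auto
          moreover have "S t1 k + enat a = enat a'" using h t1 by auto
          then have "a \<le> a'" by (cases "S t1 k") auto
          ultimately have aa: "a = a'" by simp
          have "\<forall>t<T. g k t = g k' t" using h aa enat_add_cancel unfolding S_def by blast
          moreover have "g k \<in> extensional {..<T}" "g k' \<in> extensional {..<T}"
            using gV memV k k' by auto
          ultimately have "g k = g k'" by (metis extensionalityI lessThan_iff)
          then have "k = k'" using ginj k k' by (auto dest: inj_onD)
          thus ?thesis using aa by simp
        qed
        from sparse_cases[OF x] sparse_cases[OF y] show False
        proof (elim disjE exE conjE)
          assume "x = (\<lambda>_. \<infinity>)" "y = (\<lambda>_. \<infinity>)" thus False using xy by simp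
        next
          fix k a assume "x = (\<lambda>_. \<infinity>)" "k < N" "y = ev k a"
          then have "\<forall>t<T. trop_mult_vec N S (ev k a) t = \<infinity>" using same assms by (simp add: tm_inf)
          thus False using evnot \<open>k < N\<close> by blast
        next
          fix k a assume "x = ev k a" "k < N" "y = (\<lambda>_. \<infinity>)"
          thus False using same evnot assms by (simp add: tm_inf)
        next
          fix k a k' a' assume "k < N" "x = ev k a" "k' < N" "y = ev k' a'"
          then have "\<forall>t<T. S t k + enat a = S t k' + enat a'" using same by (simp add: tm_ev)
          then have "k = k' \<and> a = a'" using eveq \<open>k < N\<close> \<open>k' < N\<close> by blast
          thus False using xy \<open>x = ev k a\<close> \<open>y = ev k' a'\<close> by simp
        qed
      qed
    qed
    show "\<exists>S. tropical_code T N 1 S \<and> within_delay T N l S" using code wd by blast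
  qed
qed

end
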